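(* Let $n\ge 1$ and $k\ge 3$ be integers and $p:=k-2$. Let $\{v_1,\dots,v_n\}$ be an orthonormal basis of $\mathbb{R}^n$ and $\lambda_r,\kappa_r\in\mathbb{R}$ with $\kappa_r<0$ for all $r$. Let $\mathcal A=\sum_{r=1}^n\lambda_r v_r^{\otimes k}$, $K=\sum_{r=1}^n\kappa_r v_rv_r^\top$, and consider $\dot x=Kx+\mathcal A x^{k-1}$ with modal coordinates $y_r(t)=v_r^\top x(t)$. Let $\mathcal I_+:=\{r:\lambda_r>0\}$, $\mathcal I_-:=\{r:\lambda_r<0\}$; for $r\in\mathcal I_+$ let $c_r:=(-\kappa_r/\lambda_r)^{1/p}>0$, and for $p$ odd and $r\in\mathcal I_-$ let $c_r:=-(\kappa_r/\lambda_r)^{1/p}<0$. Let $\mathcal R_{\mathrm{even}}:=\{x_0: |v_r^\top x_0|<c_r\ \forall r\in\mathcal I_+\}$ and $\mathcal R_{\mathrm{odd}}:=\{x_0: v_r^\top x_0<c_r\ \forall r\in\mathcal I_+,\ v_r^\top x_0>c_r\ \forall r\in\mathcal I_-\}$. Fix $\varepsilon>0$ and an initial condition $x_0$ with $x_0\in\mathcal R_{\mathrm{even}}$ if $p$ is even, or $x_0\in\mathcal R_{\mathrm{odd}}$ if $p$ is odd. For each $r$ let $T_{\varepsilon,r}:=\inf\{t\ge 0: |y_r(t)|\le\varepsilon\}$, $y_{r,0}:=v_r^\top x_0$ and $\alpha_r:=-\kappa_r>0$. Then each mode is well-defined for all $t\ge 0$ and reaches the band $|y_r(t)|\le\varepsilon$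 in finite time. If $|y_{r,0}|\le\varepsilon$ then $T_{\varepsilon,r}=0$. Otherwise ($|y_{r,0}|>\varepsilon$): (i) if $\lambda_r=0$, then $T_{\varepsilon,r}=\frac{1}{\alpha_r}\ln\big(|y_{r,0}|/\varepsilon\big)$; (ii) if $\lambda_r\neq 0$ and $p$ is even, then $$T_{\varepsilon,r}=\frac{1}{p\alpha_r}\ln\!\left(\frac{\varepsilon^{-p}-\lambda_r/\alpha_r}{|y_{r,0}|^{-p}-\lambda_r/\alpha_r}\right),$$ where the logarithm's argument is $>1$ for any $x_0\in\mathcal R_{\mathrm{even}}$ and any sufficiently small $\varepsilon>0$; (iii) if $\lambda_r\neq 0$ and $p$ is odd, then $$T_{\varepsilon,r}=\frac{1}{p\alpha_r}\ln\!\left(\frac{\varepsilon^{-p}-\operatorname{sign}(y_{r,0})\lambda_r/\alpha_r}{|y_{r,0}|^{-p}-\operatorname{sign}(y_{r,0})\lambda_r/\alpha_r}\right),$$ where the logarithm's argument is $>1$ for any $x_0\in\mathcal R_{\mathrm{odd}}$ and any sufficiently small $\varepsilon>0$.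
   Context: For $v\in\mathbb{R}^n$, $v^{\otimes k}$ is the $k$th-order tensor with entries $(v^{\otimes k})_{i_1\cdots i_k}=v_{i_1}\cdots v_{i_k}$. For a $k$th-order tensor $\mathcal A=(a_{i_1\cdots i_k})$ and $x\in\mathbb{R}^n$, $(\mathcal A x^{k-1})_i=\sum_{i_2,\dots,i_k=1}^n a_{i i_2\cdots i_k}x_{i_2}\cdots x_{i_k}$. *)

theory Defs
  imports "HOL-Analysis.Analysis"
begin

text \<open>A k-th order tensor on R^n is represented by its entries, indexed by
  lists of indices (only lists of length k are relevant).\<close>
type_synonym 'n tensor = "'n list \<Rightarrow> real"

definition tpow :: "real^'n \<Rightarrow> nat \<Rightarrow> 'n tensor" where
  "tpow v k = (\<lambda>is. if length is = k then prod_list (map (\<lambda>i. v $ i) is) else 0)"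

definition tapply :: "nat \<Rightarrow> ('n::finite) tensor \<Rightarrow> real^'n \<Rightarrow> real^'n" where
  "tapply k A x = (\<chi> i. \<Sum>is \<in> {is. length is = k - 1}. A (i # is) * prod_list (map (\<lambda>j. x $ j) is))"

definition outer :: "real^'n \<Rightarrow> real^'n \<Rightarrow> real^'n^'n" where
  "outer v w = (\<chi> i j. v $ i * w $ j)"

definition ode_sol :: "real^'n^'n \<Rightarrow> ('n::finite) tensor \<Rightarrow> nat \<Rightarrow> real^'n \<Rightarrow> (real \<Rightarrow> real^'n) \<Rightarrow> bool" where
  "ode_sol K A k x0 x \<longleftrightarrow> x 0 = x0 \<and>
     (\<forall>t\<ge>0. (x has_vector_derivative (K *v x t + tapply k A (x t))) (at t within {0..}))"

end

theory Submission
  imports Defs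
begin


lemma D_pos:
  fixes a l y0 t :: real and p :: nat
  assumes "a > 0" "l * y0^p < a" "t \<ge> 0"
  shows "1 - (l/a)*y0^p*(1 - exp(-(real p*a*t))) > 0"
proof -
  define b where "b = (l/a)*y0^p"
  have b1: "b < 1" using assms by (simp add: b_def field_simps)
  have e0: "exp(-(real p*a*t)) > 0" by simp
  have e1: "exp(-(real p*a*t)) \<le> 1" using assms by simp
  show ?thesis
  proof (cases "b \<ge> 0")
    case True
    have "1 - b*(1 - exp(-(real p*a*t))) = (1-b) + b*exp(-(real p*a*t))" by algebra
    moreover have "b*exp(-(real p*a*t)) \<ge> 0" using True e0 by simp
    ultimately show ?thesis using b1 by (simp add: b_def)
  next
    case False
    have "b*(1 - exp(-(real p*a*t))) \<le> 0" using False e1 by (simp add: mult_nonpos_nonneg)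
    then show ?thesis by (simp add: b_def)
  qed
qed

lemma ybar_deriv:
  fixes a l y0 t :: real and p :: nat
  assumes a: "a > 0" and p: "p \<ge> 1" and c: "l * y0^p < a" and t: "t \<ge> 0"
  defines "D \<equiv> \<lambda>t. 1 - (l/a)*y0^p*(1 - exp(-(real p*a*t)))"
  defines "yb \<equiv> \<lambda>t. y0 * exp(-(a*t)) * D t powr (-1/real p)"
  shows "(yb has_real_derivative (-a * yb t + l * (yb t)^(p+1))) (at t)"
proof -
  have Dp: "D t > 0" using D_pos[OF a c t] by (simp add: D_def)
  have dD: "(D has_real_derivative (-(l/a)*y0^p*(real p*a*exp(-(real p*a*t))))) (at t)"
    unfolding D_def by (auto intro!: derivative_eq_intros)
  have dW: "((\<lambda>t. D t powr (-1/real p)) has_real_derivative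
      (D t powr (-1/real p)) * ((-(l/a)*y0^p*(real p*a*exp(-(real p*a*t)))) * (-1/real p) / D t)) (at t)"
    by (rule DERIV_cong[OF DERIV_powr[OF dD Dp DERIV_const]]) simp
  have dy: "(yb has_real_derivative
      (y0 * (-a*exp(-(a*t))) * D t powr (-1/real p) + y0 * exp(-(a*t)) *
       ((D t powr (-1/real p)) * ((-(l/a)*y0^p*(real p*a*exp(-(real p*a*t)))) * (-1/real p) / D t)))) (at t)"
  proof -
    have dE: "((\<lambda>t. exp(-(a*t))) has_real_derivative (-a*exp(-(a*t)))) (at t)"
      by (auto intro!: derivative_eq_intros)
    show ?thesis unfolding yb_def
      by (rule DERIV_cong[OF DERIV_mult[OF DERIV_cmult[OF dE] dW]]) (simp add: algebra_simps)
  qed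
  have pw: "(D t powr (-(1/real p)))^p = 1 / D t"
    using Dp p by (simp add: powr_realpow[symmetric] powr_powr powr_minus divide_simps)
  have ex: "exp(-(real p*a*t)) = exp(-(a*t))^p"
    by (simp add: exp_of_nat_mult[symmetric] mult.assoc)
  have "(yb t)^(p+1) = yb t * (y0^p * exp(-(a*t))^p / D t)"
    unfolding yb_def by (simp add: power_mult_distrib pw)
  then have "-a * yb t + l * (yb t)^(p+1) =
      y0 * (-a*exp(-(a*t))) * D t powr (-1/real p) + y0 * exp(-(a*t)) *
       ((D t powr (-1/real p)) * ((-(l/a)*y0^p*(real p*a*exp(-(real p*a*t)))) * (-1/real p) / D t))"
    using a p unfolding yb_def ex by (simp add: field_simps)
  with dy show ?thesis by simp
qed

lemma pow_diff_bound:
  fixes x y M :: real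
  assumes "\<bar>x\<bar> \<le> M" "\<bar>y\<bar> \<le> M"
  shows "\<bar>x^n - y^n\<bar> \<le> real n * M^(n-1) * \<bar>x - y\<bar>"
proof -
  have "\<bar>\<Sum>i<n. y^(n - Suc i) * x^i\<bar> \<le> (\<Sum>i<n. \<bar>y^(n - Suc i) * x^i\<bar>)"
    by (rule sum_abs)
  also have "\<dots> \<le> (\<Sum>i<n. M^(n-1))"
  proof (rule sum_mono)
    fix i assume i: "i \<in> {..<n}"
    have "\<bar>y^(n - Suc i) * x^i\<bar> = \<bar>y\<bar>^(n - Suc i) * \<bar>x\<bar>^i" by (simp add: abs_mult power_abs)
    also have "\<dots> \<le> M^(n - Suc i) * M^i"
      using assms by (intro mult_mono power_mono) auto
    also have "\<dots> = M^(n-1)" using i by (simp add: power_add[symmetric])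
    finally show "\<bar>y^(n - Suc i) * x^i\<bar> \<le> M^(n-1)" .
  qed
  also have "\<dots> = real n * M^(n-1)" by simp
  finally have b: "\<bar>\<Sum>i<n. y^(n - Suc i) * x^i\<bar> \<le> real n * M^(n-1)" .
  have "\<bar>x^n - y^n\<bar> = \<bar>x - y\<bar> * \<bar>\<Sum>i<n. y^(n - Suc i) * x^i\<bar>"
    by (simp add: power_diff_sumr2 abs_mult)
  also have "\<dots> \<le> \<bar>x - y\<bar> * (real n * M^(n-1))"
    using b by (intro mult_left_mono) auto
  finally show ?thesis by (simp add: algebra_simps)
qed

lemma scalar_unique:
  fixes a l T :: real and p :: nat and y z :: "real \<Rightarrow> real"
  assumes dy: "\<And>t. t \<ge> 0 \<Longrightarrow> (y has_real_derivative (-a*y t + l*(y t)^(p+1))) (at t within {0..})"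
    and dz: "\<And>t. t \<ge> 0 \<Longrightarrow> (z has_real_derivative (-a*z t + l*(z t)^(p+1))) (at t within {0..})"
    and y0: "y 0 = z 0" and a: "a \<ge> 0" and T: "T \<ge> 0"
  shows "y T = z T"
proof -
  have contw: "continuous_on {0..T} f"
    if df: "\<And>t. t \<ge> 0 \<Longrightarrow> (f has_real_derivative (g t)) (at t within {0..})" for f g :: "real \<Rightarrow> real"
  proof -
    have "continuous (at t within {0..T}) f" if "t \<in> {0..T}" for t
    proof -
      have "(f has_real_derivative (g t)) (at t within {0..T})"
        using df[of t] that by (auto intro: DERIV_subset)
      then show ?thesis by (rule DERIV_continuous)
    qed
    then show ?thesis by (simp add: continuous_on_eq_continuous_within)
  qed
  have cy: "continuous_on {0..T} y" by (rule contw[OF dy])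
  have cz: "continuous_on {0..T} z" by (rule contw[OF dz])
  obtain My where My: "\<forall>x\<in>y ` {0..T}. \<bar>x\<bar> \<le> My"
    using compact_imp_bounded[OF compact_continuous_image[OF cy compact_Icc]] bounded_real by blast
  obtain Mz where Mz: "\<forall>x\<in>z ` {0..T}. \<bar>x\<bar> \<le> Mz"
    using compact_imp_bounded[OF compact_continuous_image[OF cz compact_Icc]] bounded_real by blast
  define M where "M = max My Mz"
  have yM: "\<bar>y t\<bar> \<le> M" and zM: "\<bar>z t\<bar> \<le> M" if "t \<in> {0..T}" for t
    using My Mz that unfolding M_def by force+
  define Lc where "Lc = \<bar>l\<bar> * real (p+1) * M^p"
  have L0: "Lc \<ge> 0" using yM[of 0] T unfolding Lc_def by auto
  define g where "g = (\<lambda>s. (y s - z s)^2 * exp(-(2*Lc* s)))"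
  define gd where "gd = (\<lambda>s. 2*(y s - z s)*((-a*y s + l*(y s)^(p+1)) - (-a*z s + l*(z s)^(p+1)))*exp(-(2*Lc* s))
       + (y s - z s)^2 * (-(2*Lc)*exp(-(2*Lc* s))))"
  have dg: "(g has_real_derivative gd s) (at s within {0..})" if "s \<ge> 0" for s
  proof -
    have de: "((\<lambda>s. exp(-(2*Lc * s))) has_real_derivative (-(2*Lc)*exp(-(2*Lc * s)))) (at s within {0..})"
      by (auto intro!: derivative_eq_intros)
    show ?thesis unfolding g_def gd_def
      by (rule DERIV_cong[OF DERIV_mult[OF DERIV_power[OF DERIV_diff[OF dy[OF that] dz[OF that]]] de]])
        simp
  qed
  have key: "gd s \<le> 0" if "s \<in> {0..T}" for s
  proof -
    define d where "d = y s - z s"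
    have b: "\<bar>(y s)^(p+1) - (z s)^(p+1)\<bar> \<le> real (p+1) * M^p * \<bar>d\<bar>"
      using pow_diff_bound[OF yM[OF that] zM[OF that], of "p+1"] by (simp add: d_def)
    have "d * (l*((y s)^(p+1) - (z s)^(p+1))) \<le> \<bar>d\<bar> * (\<bar>l\<bar> * \<bar>(y s)^(p+1) - (z s)^(p+1)\<bar>)"
      by (metis abs_ge_self abs_mult)
    also have "\<dots> \<le> \<bar>d\<bar> * (\<bar>l\<bar> * (real (p+1) * M^p * \<bar>d\<bar>))"
      using b by (intro mult_left_mono) auto
    also have "\<dots> = Lc * d^2" by (simp add: Lc_def power2_eq_square abs_mult_self algebra_simps)
    finally have i1: "d * (l*((y s)^(p+1) - (z s)^(p+1))) \<le> Lc * d^2" .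
    have i2: "d*((-a*y s + l*(y s)^(p+1)) - (-a*z s + l*(z s)^(p+1))) = -a*d^2 + d * (l*((y s)^(p+1) - (z s)^(p+1)))"
      by (simp add: d_def power2_eq_square algebra_simps)
    have "d*((-a*y s + l*(y s)^(p+1)) - (-a*z s + l*(z s)^(p+1))) \<le> Lc * d^2"
    proof -
      have "a*d^2 \<ge> 0" using a by simp
      then show ?thesis using i1 i2 by linarith
    qed
    then have "2*(d*((-a*y s + l*(y s)^(p+1)) - (-a*z s + l*(z s)^(p+1)))) - 2*(Lc*d^2) \<le> 0"
      by linarith
    then have "(2*(d*((-a*y s + l*(y s)^(p+1)) - (-a*z s + l*(z s)^(p+1)))) - 2*(Lc*d^2)) * exp(-(2*Lc* s)) \<le> 0"
      by (rule mult_nonpos_nonneg) simp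
    moreover have "(2*(d*((-a*y s + l*(y s)^(p+1)) - (-a*z s + l*(z s)^(p+1)))) - 2*(Lc*d^2)) * exp(-(2*Lc* s)) =
      2*(y s - z s)*((-a*y s + l*(y s)^(p+1)) - (-a*z s + l*(z s)^(p+1)))*exp(-(2*Lc* s))
       + (y s - z s)^2 * (-(2*Lc)*exp(-(2*Lc* s)))"
      unfolding d_def by (simp only: algebra_simps)
    ultimately show ?thesis unfolding gd_def by simp
  qed
  have cg: "continuous_on {0..T} g" by (rule contw[OF dg])
  have "g T \<le> g 0"
  proof (rule DERIV_nonpos_imp_decreasing_open[OF T _ cg])
    fix x assume x: "0 < x" "x < T"
    have x0: "x \<ge> 0" using x by simp
    have "(g has_real_derivative gd x) (at x within {0<..})"
      by (rule DERIV_subset[OF dg[OF x0]]) (auto simp only: subset_iff greaterThan_iff atLeast_iff less_imp_le)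
    moreover have "at x within {0<..} = at x"
      by (rule at_within_open) (use x in simp_all)
    ultimately have "(g has_real_derivative gd x) (at x)" by simp
    then show "\<exists>y. (g has_real_derivative y) (at x) \<and> y \<le> 0"
      using key[of x] x by auto
  qed
  moreover have "g 0 = 0" using y0 by (simp add: g_def)
  moreover have "g T \<ge> 0" by (simp add: g_def)
  ultimately have "g T = 0" by simp
  then show ?thesis by (simp add: g_def)
qed



lemma expand_orthonormal:
  fixes v :: "'n::finite \<Rightarrow> real^'n"
  assumes orth: "\<forall>r s. v r \<bullet> v s = (if r = s then 1 else 0)"
  shows "(\<Sum>r\<in>UNIV. (v r \<bullet> x) *\<^sub>R v r) = x"
proof -
  have inj: "inj v"
  proof (rule injI)
    fix r s assume "v r = v s"
    then have "v r \<bullet> v s = 1" using orth by (metis)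
    then show "r = s" using orth by (metis zero_neq_one)
  qed
  let ?B = "range v"
  have po: "pairwise orthogonal ?B"
    unfolding pairwise_def orthogonal_def using orth by auto
  have n0: "0 \<notin> ?B"
  proof
    assume "0 \<in> ?B"
    then obtain r where "v r = 0" by auto
    then show False using orth[rule_format, of r r] by simp
  qed
  have ind: "independent ?B" by (rule pairwise_orthogonal_independent[OF po n0])
  have cB: "card ?B = CARD('n)" using inj by (simp add: card_image)
  have "UNIV \<subseteq> span ?B"
    by (rule card_ge_dim_independent[OF subset_UNIV ind]) (simp add: cB)
  then have xs: "x \<in> span ?B" by auto
  have "(\<Sum>i\<in>?B. (x \<bullet> i) *\<^sub>R i) = x"
    by (rule orthonormal_basis_expand[OF po _ xs]) (auto simp: norm_eq_sqrt_inner orth)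
  then show ?thesis
    by (simp add: sum.reindex[OF inj] inner_commute)
qed

lemma inner_orth_sum:
  fixes v :: "'n::finite \<Rightarrow> real^'n"
  assumes orth: "\<forall>r s. v r \<bullet> v s = (if r = s then 1 else 0)"
  shows "v s \<bullet> (\<Sum>r\<in>UNIV. c r *\<^sub>R v r) = c s"
proof -
  have "v s \<bullet> (\<Sum>r\<in>UNIV. c r *\<^sub>R v r) = (\<Sum>r\<in>UNIV. c r * (v s \<bullet> v r))"
    by (simp add: inner_sum_right)
  also have "\<dots> = (\<Sum>r\<in>UNIV. if r = s then c r else 0)"
    by (rule sum.cong) (use orth in auto)
  finally show ?thesis by simp
qed

lemma prod_list_map_mult:
  "prod_list (map f xs) * prod_list (map g xs) = prod_list (map (\<lambda>j. f j * g j) xs)" for f g :: "'a \<Rightarrow> real"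
  by (induction xs) (auto simp: algebra_simps)

lemma sum_lists_prod:
  fixes f :: "'n::finite \<Rightarrow> real"
  shows "(\<Sum>is\<in>{is. length is = m}. prod_list (map f is)) = (\<Sum>j\<in>UNIV. f j)^m"
proof (induction m)
  case 0
  then show ?case by simp
next
  case (Suc m)
  have fin: "finite {is::'n list. length is = m}"
    using finite_lists_length_eq[of "UNIV::'n set" m] by simp
  have eq: "{is::'n list. length is = Suc m} = (\<lambda>(i,is). i # is) ` (UNIV \<times> {is. length is = m})"
    by (auto simp: length_Suc_conv image_iff)
  have inj: "inj_on (\<lambda>(i,is). i # is) (UNIV \<times> {is::'n list. length is = m})"
    by (auto simp: inj_on_def)
  have "(\<Sum>is\<in>{is::'n list. length is = Suc m}. prod_list (map f is))
      = (\<Sum>(i,is)\<in>UNIV \<times> {is. length is = m}. f i * prod_list (map f is))"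
    unfolding eq by (subst sum.reindex[OF inj]) (simp add: case_prod_unfold)
  also have "\<dots> = (\<Sum>i\<in>UNIV. \<Sum>is\<in>{is. length is = m}. f i * prod_list (map f is))"
    by (rule sum.cartesian_product[symmetric])
  also have "\<dots> = (\<Sum>i\<in>UNIV. f i * (\<Sum>is\<in>{is. length is = m}. prod_list (map f is)))"
    by (simp add: sum_distrib_left)
  also have "\<dots> = (\<Sum>i\<in>UNIV. f i) * (\<Sum>is\<in>{is. length is = m}. prod_list (map f is))"
    by (simp add: sum_distrib_right)
  finally show ?case using Suc by simp
qed

lemma tapply_eq:
  fixes v :: "'n::finite \<Rightarrow> real^'n" and lam :: "'n \<Rightarrow> real"
  assumes k: "k \<ge> 1"
  shows "tapply k (\<lambda>is. \<Sum>r\<in>UNIV. lam r * tpow (v r) k is) x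
       = (\<Sum>r\<in>UNIV. (lam r * (v r \<bullet> x)^(k-1)) *\<^sub>R v r)"
proof (rule vec_eq_iff[THEN iffD2], rule allI)
  fix i
  have "(tapply k (\<lambda>is. \<Sum>r\<in>UNIV. lam r * tpow (v r) k is) x) $ i
      = (\<Sum>js\<in>{is. length is = k - 1}. (\<Sum>r\<in>UNIV. lam r * tpow (v r) k (i # js)) * prod_list (map (\<lambda>j. x $ j) js))"
    unfolding tapply_def by simp
  also have "\<dots> = (\<Sum>is\<in>{is. length is = k - 1}. \<Sum>r\<in>UNIV. lam r * (v r $ i) *
            prod_list (map (\<lambda>j. v r $ j * x $ j) is))"
  proof (rule sum.cong[OF refl])
    fix js :: "'n list" assume "js \<in> {is. length is = k - 1}"
    then have l: "Suc (length js) = k" using k by auto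
    show "(\<Sum>r\<in>UNIV. lam r * tpow (v r) k (i # js)) * prod_list (map (\<lambda>j. x $ j) js) =
          (\<Sum>r\<in>UNIV. lam r * v r $ i * prod_list (map (\<lambda>j. v r $ j * x $ j) js))"
      unfolding sum_distrib_right
      by (rule sum.cong[OF refl]) (simp add: tpow_def l prod_list_map_mult[symmetric])
  qed
  also have "\<dots> = (\<Sum>r\<in>UNIV. lam r * (v r $ i) *
            (\<Sum>is\<in>{is. length is = k - 1}. prod_list (map (\<lambda>j. v r $ j * x $ j) is)))"
    by (subst sum.swap) (simp add: sum_distrib_left)
  also have "\<dots> = (\<Sum>r\<in>UNIV. lam r * (v r $ i) * (v r \<bullet> x)^(k-1))"
    by (simp add: sum_lists_prod inner_vec_def)
  also have "\<dots> = (\<Sum>r\<in>UNIV. (lam r * (v r \<bullet> x)^(k-1)) *\<^sub>R v r) $ i"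
    by (simp add: sum_component algebra_simps)
  finally show "tapply k (\<lambda>is. \<Sum>r\<in>UNIV. lam r * tpow (v r) k is) x $ i =
         (\<Sum>r\<in>UNIV. (lam r * (v r \<bullet> x)^(k-1)) *\<^sub>R v r) $ i" .
qed

lemma Kmult_eq:
  fixes v :: "'n::finite \<Rightarrow> real^'n" and kap :: "'n \<Rightarrow> real"
  shows "(\<Sum>r\<in>UNIV. kap r *\<^sub>R outer (v r) (v r)) *v x = (\<Sum>r\<in>UNIV. (kap r * (v r \<bullet> x)) *\<^sub>R v r)"
proof (rule vec_eq_iff[THEN iffD2], rule allI)
  fix i
  have "((\<Sum>r\<in>UNIV. kap r *\<^sub>R outer (v r) (v r)) *v x) $ i
     = (\<Sum>j\<in>UNIV. (\<Sum>r\<in>UNIV. kap r * (v r $ i * v r $ j)) * x $ j)"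
    by (simp add: matrix_vector_mult_def sum_component outer_def)
  also have "\<dots> = (\<Sum>j\<in>UNIV. \<Sum>r\<in>UNIV. kap r * v r $ i * (v r $ j * x $ j))"
    by (simp add: sum_distrib_left sum_distrib_right mult_ac)
  also have "\<dots> = (\<Sum>r\<in>UNIV. \<Sum>j\<in>UNIV. kap r * v r $ i * (v r $ j * x $ j))"
    by (rule sum.swap)
  also have "\<dots> = (\<Sum>r\<in>UNIV. kap r * v r $ i * (\<Sum>j\<in>UNIV. v r $ j * x $ j))"
    by (simp add: sum_distrib_left)
  also have "\<dots> = (\<Sum>r\<in>UNIV. (kap r * (v r \<bullet> x)) *\<^sub>R v r) $ i"
    by (simp add: sum_component inner_vec_def algebra_simps)
  finally show "((\<Sum>r\<in>UNIV. kap r *\<^sub>R outer (v r) (v r)) *v x) $ i = (\<Sum>r\<in>UNIV. (kap r * (v r \<bullet> x)) *\<^sub>R v r) $ i" .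
qed

lemma deriv_inner:
  fixes w :: "real^'n::finite"
  assumes "(x has_vector_derivative X) (at t within S)"
  shows "((\<lambda>t. w \<bullet> x t) has_real_derivative (w \<bullet> X)) (at t within S)"
proof -
  have "((\<lambda>t. w \<bullet> x t) has_vector_derivative (w \<bullet> X)) (at t within S)"
    by (rule bounded_linear.has_vector_derivative[OF bounded_linear_inner_right assms])
  then show ?thesis by (simp add: has_real_derivative_iff_has_vector_derivative)
qed



lemma inf_part:
  fixes a l y0 \<epsilon> :: real and p :: nat
  assumes a: "a > 0" and p: "p \<ge> 1" and c: "l * y0^p < a" and e: "\<epsilon> > 0" and big: "\<bar>y0\<bar> > \<epsilon>"
  defines "yb \<equiv> \<lambda>t. y0 * exp(-(a*t)) * (1 - (l/a)*y0^p*(1 - exp(-(real p*a*t)))) powr (-1/real p)"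
  defines "\<sigma> \<equiv> sgn y0 ^ p"
  defines "q \<equiv> (\<epsilon> powr (- real p) - \<sigma> * l / a) / (\<bar>y0\<bar> powr (- real p) - \<sigma> * l / a)"
  shows "q > 1 \<and> {t. t \<ge> 0 \<and> \<bar>yb t\<bar> \<le> \<epsilon>} = {ln q / (real p * a)..}"
proof -
  define A where "A = \<bar>y0\<bar>^p"
  define e where "e = \<epsilon>^p"
  define s where "s = \<sigma> * l / a"
  have y0nz: "y0 \<noteq> 0" using big e by auto
  have A0: "A > 0" using y0nz by (simp add: A_def)
  have e0: "e > 0" using e by (simp add: e_def)
  have eA: "e < A" unfolding e_def A_def using big e p by (intro power_strict_mono) auto
  have y0p: "y0^p = \<sigma> * A"
    unfolding \<sigma>_def A_def by (simp add: power_mult_distrib[symmetric] sgn_mult_abs)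
  have sA: "s * A < 1"
  proof -
    have "s * A = l * y0^p / a" by (simp add: s_def y0p)
    then show ?thesis using c a by (simp add: divide_less_eq)
  qed
  have es: "e * s < 1"
  proof (cases "s > 0")
    case True
    then have "e * s < A * s" using eA by simp
    then show ?thesis using sA by (simp add: mult.commute)
  next
    case False
    then have "e * s \<le> 0" using e0 by (simp add: mult_nonneg_nonpos)
    then show ?thesis by simp
  qed
  have epw: "\<epsilon> powr (- real p) = 1 / e" using e by (simp add: powr_minus powr_realpow e_def divide_inverse)
  have ypw: "\<bar>y0\<bar> powr (- real p) = 1 / A" using y0nz by (simp add: powr_minus powr_realpow A_def divide_inverse)
  have qeq: "q = A * (1 - e * s) / (e * (1 - A * s))"
    unfolding q_def epw ypw s_def[symmetric] using A0 e0 sA es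
    by (simp add: field_simps)
  have qgt: "q > 1"
  proof -
    have "e * (1 - A * s) < A * (1 - e * s)" using eA by (simp add: algebra_simps)
    moreover have "e * (1 - A * s) > 0" using e0 sA by (simp add: mult.commute)
    ultimately show ?thesis unfolding qeq by (simp add: divide_simps)
  qed
  have q0: "q > 0" using qgt by simp
  have main: "\<bar>yb t\<bar> \<le> \<epsilon> \<longleftrightarrow> t \<ge> ln q / (real p * a)" if t: "t \<ge> 0" for t
  proof -
    define X where "X = exp(-(real p*a*t))"
    define E where "E = exp(-(a*t))"
    define D where "D = 1 - (l/a)*y0^p*(1 - X)"
    have X0: "X > 0" by (simp add: X_def)
    have EX: "E^p = X" by (simp add: E_def X_def exp_of_nat_mult[symmetric] mult.assoc)
    have Dform: "D = 1 - s*A*(1 - X)" by (simp add: D_def s_def y0p)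
    have Dp: "D > 0"
    proof (cases "s \<ge> 0")
      case True
      have "D = (1 - s*A) + s*A*X" by (simp add: Dform algebra_simps)
      moreover have "s*A*X \<ge> 0" using True A0 X0 by simp
      ultimately show ?thesis using sA by simp
    next
      case False
      have "X \<le> 1" using t a by (simp add: X_def)
      then have "s*A*(1 - X) \<le> 0" using False A0 by (simp add: mult_nonpos_nonneg)
      then show ?thesis by (simp add: Dform)
    qed
    have ybt: "yb t = y0 * E * D powr (-1/real p)"
      by (simp add: yb_def E_def D_def X_def)
    have W0: "D powr (-1/real p) > 0" using Dp by simp
    have Wp: "(D powr (-(1/real p)))^p = 1 / D"
      using Dp p by (simp add: powr_realpow[symmetric] powr_powr powr_minus divide_simps)
    have absyb: "\<bar>yb t\<bar>^p = A * X / D"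
      unfolding ybt using W0 by (simp add: abs_mult power_mult_distrib Wp A_def EX[symmetric] E_def)
    have "\<bar>yb t\<bar> \<le> \<epsilon> \<longleftrightarrow> \<bar>yb t\<bar>^p \<le> e"
      unfolding e_def using e p by (subst power_mono_iff) auto
    also have "\<dots> \<longleftrightarrow> A * X \<le> e * D" using Dp by (simp add: absyb divide_le_eq)
    also have "\<dots> \<longleftrightarrow> X * (A * (1 - e * s)) \<le> e * (1 - A * s)"
      by (simp add: Dform algebra_simps)
    also have "\<dots> \<longleftrightarrow> X \<le> 1 / q"
    proof -
      have p1: "A * (1 - e * s) > 0" using A0 es by simp
      have p2: "e * (1 - A * s) > 0" using e0 sA by (simp add: mult.commute)
      have "1 / q = e * (1 - A * s) / (A * (1 - e * s))" unfolding qeq by simp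
      then show ?thesis using p1 by (simp add: pos_le_divide_eq)
    qed
    also have "\<dots> \<longleftrightarrow> -(real p*a*t) \<le> - ln q"
    proof -
      have "1 / q = exp (- ln q)" using q0 by (simp add: exp_minus divide_inverse)
      then show ?thesis unfolding X_def by simp
    qed
    also have "\<dots> \<longleftrightarrow> t \<ge> ln q / (real p * a)"
      using a p by (simp add: divide_le_eq mult.commute mult.left_commute)
    finally show ?thesis .
  qed
  have "ln q / (real p * a) \<ge> 0" using qgt a by simp
  then have "{t. t \<ge> 0 \<and> \<bar>yb t\<bar> \<le> \<epsilon>} = {ln q / (real p * a)..}"
    using main by auto
  then show ?thesis using qgt by simp
qed


lemma root_pow:
  fixes b :: real and p :: nat
  assumes "b > 0" "p \<ge> 1"
  shows "(b powr (1/real p))^p = b"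
  using assms by (simp add: powr_realpow[symmetric] powr_powr)

lemma region_cond:
  fixes lam kap c y :: real and p :: nat
  assumes p: "p \<ge> 1" and kap: "kap < 0"
    and cp: "lam > 0 \<longrightarrow> c = (- kap / lam) powr (1 / real p)"
    and cm: "odd p \<longrightarrow> lam < 0 \<longrightarrow> c = - ((kap / lam) powr (1 / real p))"
    and re: "even p \<longrightarrow> lam > 0 \<longrightarrow> \<bar>y\<bar> < c"
    and ro: "odd p \<longrightarrow> (lam > 0 \<longrightarrow> y < c) \<and> (lam < 0 \<longrightarrow> y > c)"
  shows "lam * y^p < - kap"
proof -
  consider "lam = 0" | "lam > 0" | "lam < 0" by linarith
  then show ?thesis
  proof cases
    case 1
    then show ?thesis using kap by simp
  next
    case 2
    have b0: "- kap / lam > 0" using 2 kap by (intro divide_pos_pos) auto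
    have cpow: "c^p = - kap / lam" using cp 2 root_pow[OF b0 p] by simp
    have c0: "c > 0" using cp 2 b0 kap by simp
    have "y^p < c^p"
    proof (cases "even p")
      case True
      then have "\<bar>y\<bar>^p < c^p" using re 2 p by (intro power_strict_mono) auto
      then show ?thesis using True by (simp add: power_even_abs)
    next
      case False
      show ?thesis
      proof (cases "y \<le> 0")
        case True
        then have "y^p \<le> 0" using False p by (simp add: power_le_zero_eq)
        also have "0 < c^p" using c0 by simp
        finally show ?thesis .
      next
        case nn: False
        then show ?thesis using ro False 2 p by (intro power_strict_mono) auto
      qed
    qed
    then have "lam * y^p < lam * c^p" using 2 by simp
    then show ?thesis using cpow 2 by simp
  next
    case 3
    show ?thesis
    proof (cases "y^p \<ge> 0")
      case True
      then have "lam * y^p \<le> 0" using 3 by (simp add: mult_nonpos_nonneg)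
      then show ?thesis using kap by simp
    next
      case False
      then have odd: "odd p" by (metis zero_le_even_power)
      have yneg: "y < 0" using False by (metis not_le zero_le_power less_imp_le not_less) 
      have b0: "kap / lam > 0" using 3 kap by (simp add: divide_neg_neg)
      have dpow: "((kap / lam) powr (1/real p))^p = kap / lam" using root_pow[OF b0 p] .
      have "-y < (kap / lam) powr (1/real p)" using ro cm odd 3 by auto
      then have "(-y)^p < ((kap / lam) powr (1/real p))^p" using yneg p by (intro power_strict_mono) auto
      then have "- (y^p) < kap / lam" using odd dpow by (simp add: power_minus_odd)
      then have "(-lam) * (- (y^p)) < (-lam) * (kap / lam)" using 3 by (intro mult_strict_left_mono) auto
      then show ?thesis using 3 by simp
    qed
  qed
qed

theorem proposition2:
  fixes v :: "'n::finite \<Rightarrow> real^'n" and lam kap c :: "'n \<Rightarrow> real"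
    and k p :: nat and x0 :: "real^'n" and \<epsilon> :: real
    and A :: "'n tensor" and K :: "real^'n^'n"
  assumes k3: "k \<ge> 3"
    and p_def: "p = k - 2"
    and orthonormal: "\<forall>r s. v r \<bullet> v s = (if r = s then 1 else 0)"
    and kap_neg: "\<forall>r. kap r < 0"
    and A_def: "A = (\<lambda>is. \<Sum>r\<in>UNIV. lam r * tpow (v r) k is)"
    and K_def: "K = (\<Sum>r\<in>UNIV. kap r *\<^sub>R outer (v r) (v r))"
    and c_plus: "\<forall>r. lam r > 0 \<longrightarrow> c r = (- kap r / lam r) powr (1 / real p)"
    and c_minus: "odd p \<longrightarrow> (\<forall>r. lam r < 0 \<longrightarrow> c r = - ((kap r / lam r) powr (1 / real p)))"
    and R_even: "even p \<longrightarrow> x0 \<in> {x. \<forall>r. lam r > 0 \<longrightarrow> \<bar>v r \<bullet> x\<bar> < c r}"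
    and R_odd: "odd p \<longrightarrow> x0 \<in> {x. (\<forall>r. lam r > 0 \<longrightarrow> v r \<bullet> x < c r) \<and>
                                      (\<forall>r. lam r < 0 \<longrightarrow> v r \<bullet> x > c r)}"
    and eps_pos: "\<epsilon> > 0"
  shows "(\<exists>x. ode_sol K A k x0 x) \<and>
    (\<forall>x. ode_sol K A k x0 x \<longrightarrow> (\<forall>r.
      let y = (\<lambda>t. v r \<bullet> x t); y0 = v r \<bullet> x0; \<alpha> = - kap r;
          S = {t. t \<ge> 0 \<and> \<bar>y t\<bar> \<le> \<epsilon>}; T = Inf S
      in S \<noteq> {} \<and>
         (\<bar>y0\<bar> \<le> \<epsilon> \<longrightarrow> T = 0) \<and>
         (\<bar>y0\<bar> > \<epsilon> \<and> lam r = 0 \<longrightarrow> T = (1 / \<alpha>) * ln (\<bar>y0\<bar> / \<epsilon>)) \<and>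
         (\<bar>y0\<bar> > \<epsilon> \<and> lam r \<noteq> 0 \<and> even p \<longrightarrow>
            (let q = (\<epsilon> powr (- real p) - lam r / \<alpha>) / (\<bar>y0\<bar> powr (- real p) - lam r / \<alpha>)
             in q > 1 \<and> T = (1 / (real p * \<alpha>)) * ln q)) \<and>
         (\<bar>y0\<bar> > \<epsilon> \<and> lam r \<noteq> 0 \<and> odd p \<longrightarrow>
            (let q = (\<epsilon> powr (- real p) - sgn y0 * lam r / \<alpha>) /
                     (\<bar>y0\<bar> powr (- real p) - sgn y0 * lam r / \<alpha>)
             in q > 1 \<and> T = (1 / (real p * \<alpha>)) * ln q))))"
  
proof -
  have p1: "p \<ge> 1" and km1: "k - 1 = p + 1" and k1: "k \<ge> 1" using k3 p_def by auto
  define \<alpha> where "\<alpha> r = - kap r" for r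
  have \<alpha>0: "\<alpha> r > 0" for r using kap_neg by (simp add: \<alpha>_def)
  define y0 where "y0 r = v r \<bullet> x0" for r
  define yb where "yb r t = y0 r * exp(-(\<alpha> r*t)) *
     (1 - (lam r/\<alpha> r)*y0 r^p*(1 - exp(-(real p*\<alpha> r*t)))) powr (-1/real p)" for r t
  have cond: "lam r * (y0 r)^p < \<alpha> r" for r
    unfolding \<alpha>_def y0_def
    apply (rule region_cond[OF p1 kap_neg[rule_format], where c="c r"])
    subgoal using c_plus by blast
    subgoal using c_minus by blast
    subgoal using R_even by auto
    subgoal using R_odd by auto
    done
  have field: "K *v z + tapply k A z = (\<Sum>r\<in>UNIV. (- \<alpha> r * (v r \<bullet> z) + lam r * (v r \<bullet> z)^(p+1)) *\<^sub>R v r)" for z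
    unfolding K_def A_def Kmult_eq tapply_eq[OF k1] km1
    by (simp add: \<alpha>_def scaleR_add_left sum.distrib)
  have fieldr: "v s \<bullet> (K *v z + tapply k A z) = - \<alpha> s * (v s \<bullet> z) + lam s * (v s \<bullet> z)^(p+1)" for s z
    unfolding field by (rule inner_orth_sum[OF orthonormal])
  have ybd: "(yb r has_real_derivative (- \<alpha> r * yb r t + lam r * (yb r t)^(p+1))) (at t)" if "t \<ge> 0" for r t
    unfolding yb_def by (rule ybar_deriv[OF \<alpha>0 p1 cond that])
  have yb0: "yb r 0 = y0 r" for r by (simp add: yb_def)
  define xs where "xs t = (\<Sum>r\<in>UNIV. yb r t *\<^sub>R v r)" for t
  have xsr: "v r \<bullet> xs t = yb r t" for r t unfolding xs_def by (rule inner_orth_sum[OF orthonormal])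
  have ex: "ode_sol K A k x0 xs"
    unfolding ode_sol_def
  proof (intro conjI allI impI)
    show "xs 0 = x0" unfolding xs_def yb0 y0_def by (rule expand_orthonormal[OF orthonormal])
  next
    fix t :: real assume t: "t \<ge> 0"
    have "(xs has_vector_derivative (\<Sum>r\<in>UNIV. (- \<alpha> r * yb r t + lam r * (yb r t)^(p+1)) *\<^sub>R v r)) (at t)"
      unfolding xs_def
    proof (rule has_vector_derivative_sum)
      fix r
      have "((\<lambda>t. yb r t *\<^sub>R v r) has_vector_derivative (yb r t *\<^sub>R 0 + (- \<alpha> r * yb r t + lam r * (yb r t)^(p+1)) *\<^sub>R v r)) (at t)"
        by (rule has_vector_derivative_scaleR[OF ybd[OF t] has_vector_derivative_const])
      then show "((\<lambda>t. yb r t *\<^sub>R v r) has_vector_derivative ((- \<alpha> r * yb r t + lam r * (yb r t)^(p+1)) *\<^sub>R v r)) (at t)"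
        by simp
    qed
    moreover have "(\<Sum>r\<in>UNIV. (- \<alpha> r * yb r t + lam r * (yb r t)^(p+1)) *\<^sub>R v r) = K *v xs t + tapply k A (xs t)"
      unfolding field xsr ..
    ultimately show "(xs has_vector_derivative K *v xs t + tapply k A (xs t)) (at t within {0..})"
      by (simp add: has_vector_derivative_at_within)
  qed
  have uniq: "v r \<bullet> x t = yb r t" if sol: "ode_sol K A k x0 x" and t: "t \<ge> 0" for x r t
  proof (rule scalar_unique[where a="\<alpha> r" and l="lam r" and p=p and y="\<lambda>t. v r \<bullet> x t" and z="yb r" and T=t])
    fix s :: real assume s: "s \<ge> 0"
    have "(x has_vector_derivative K *v x s + tapply k A (x s)) (at s within {0..})"
      using sol s unfolding ode_sol_def by auto
    note deriv_inner[OF this, of "v r"]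
    then show "((\<lambda>t. v r \<bullet> x t) has_real_derivative (- \<alpha> r * (v r \<bullet> x s) + lam r * (v r \<bullet> x s)^(p+1))) (at s within {0..})"
      by (simp only: fieldr)
  next
    fix s :: real assume s: "s \<ge> 0"
    show "(yb r has_real_derivative (- \<alpha> r * yb r s + lam r * (yb r s)^(p+1))) (at s within {0..})"
      by (rule has_field_derivative_at_within[OF ybd[OF s]])
  next
    show "v r \<bullet> x 0 = yb r 0" using sol unfolding ode_sol_def yb0 y0_def by simp
  qed (use \<alpha>0[of r] t in \<open>auto simp: less_imp_le\<close>)
  show ?thesis
  proof (intro conjI allI impI)
    show "\<exists>x. ode_sol K A k x0 x" using ex by blast
  next
    fix x r assume sol: "ode_sol K A k x0 x"
    define S where "S = {t. t \<ge> 0 \<and> \<bar>v r \<bullet> x t\<bar> \<le> \<epsilon>}"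
    have Sy: "S = {t. t \<ge> 0 \<and> \<bar>yb r t\<bar> \<le> \<epsilon>}" unfolding S_def using uniq[OF sol] by auto
    have small: "S \<noteq> {} \<and> Inf S = 0" if sm: "\<bar>y0 r\<bar> \<le> \<epsilon>"
    proof -
      have "0 \<in> S" unfolding Sy using sm eps_pos by (simp add: yb0)
      moreover have "Inf S = 0" by (rule cInf_eq_minimum[OF \<open>0 \<in> S\<close>]) (simp add: Sy)
      ultimately show ?thesis by auto
    qed
    define \<sigma> where "\<sigma> = sgn (y0 r) ^ p"
    define q where "q = (\<epsilon> powr (- real p) - \<sigma> * lam r / \<alpha> r) / (\<bar>y0 r\<bar> powr (- real p) - \<sigma> * lam r / \<alpha> r)"
    have big: "q > 1 \<and> S = {ln q / (real p * \<alpha> r)..}" if bg: "\<bar>y0 r\<bar> > \<epsilon>"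
      unfolding Sy q_def \<sigma>_def yb_def by (rule inf_part[OF \<alpha>0 p1 cond eps_pos bg])
    have y0nz: "y0 r \<noteq> 0" if bg: "\<bar>y0 r\<bar> > \<epsilon>" using bg eps_pos by auto
    have sig_even: "\<sigma> = 1" if "even p" "y0 r \<noteq> 0"
      using that unfolding \<sigma>_def by (cases "y0 r > 0") (auto simp: sgn_if)
    have sig_odd: "\<sigma> = sgn (y0 r)" if "odd p"
      using that p1 unfolding \<sigma>_def by (cases "y0 r > 0"; cases "y0 r = 0") (auto simp: sgn_if)
    have lam0: "ln q / (real p * \<alpha> r) = (1 / \<alpha> r) * ln (\<bar>y0 r\<bar> / \<epsilon>)" if bg: "\<bar>y0 r\<bar> > \<epsilon>" and l0: "lam r = 0"
    proof -
      have "q = \<epsilon> powr (- real p) / \<bar>y0 r\<bar> powr (- real p)" unfolding q_def l0 by simp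
      then have "ln q = real p * ln (\<bar>y0 r\<bar> / \<epsilon>)"
        using bg eps_pos by (simp add: ln_div algebra_simps)
      then show ?thesis using p1 \<alpha>0[of r] by simp
    qed
    show "let y = (\<lambda>t. v r \<bullet> x t); y0 = v r \<bullet> x0; \<alpha> = - kap r;
          S = {t. t \<ge> 0 \<and> \<bar>y t\<bar> \<le> \<epsilon>}; T = Inf S
      in S \<noteq> {} \<and>
         (\<bar>y0\<bar> \<le> \<epsilon> \<longrightarrow> T = 0) \<and>
         (\<bar>y0\<bar> > \<epsilon> \<and> lam r = 0 \<longrightarrow> T = (1 / \<alpha>) * ln (\<bar>y0\<bar> / \<epsilon>)) \<and>
         (\<bar>y0\<bar> > \<epsilon> \<and> lam r \<noteq> 0 \<and> even p \<longrightarrow>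
            (let q = (\<epsilon> powr (- real p) - lam r / \<alpha>) / (\<bar>y0\<bar> powr (- real p) - lam r / \<alpha>)
             in q > 1 \<and> T = (1 / (real p * \<alpha>)) * ln q)) \<and>
         (\<bar>y0\<bar> > \<epsilon> \<and> lam r \<noteq> 0 \<and> odd p \<longrightarrow>
            (let q = (\<epsilon> powr (- real p) - sgn y0 * lam r / \<alpha>) /
                     (\<bar>y0\<bar> powr (- real p) - sgn y0 * lam r / \<alpha>)
             in q > 1 \<and> T = (1 / (real p * \<alpha>)) * ln q))"
      unfolding Let_def S_def[symmetric] y0_def[symmetric] \<alpha>_def[symmetric]
    proof (intro conjI impI)
      show "S \<noteq> {}" using small big by (cases "\<bar>y0 r\<bar> \<le> \<epsilon>") auto
    next
      assume "\<bar>y0 r\<bar> \<le> \<epsilon>" then show "Inf S = 0" using small by blast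
    next
      assume h: "\<epsilon> < \<bar>y0 r\<bar> \<and> lam r = 0"
      then show "Inf S = 1 / \<alpha> r * ln (\<bar>y0 r\<bar> / \<epsilon>)" using big lam0 by auto
    next
      assume h: "\<epsilon> < \<bar>y0 r\<bar> \<and> lam r \<noteq> 0 \<and> even p"
      then have s1: "\<sigma> = 1" using sig_even y0nz by blast
      show "1 < (\<epsilon> powr - real p - lam r / \<alpha> r) / (\<bar>y0 r\<bar> powr - real p - lam r / \<alpha> r)"
        using big h unfolding q_def s1 by auto
      show "Inf S = 1 / (real p * \<alpha> r) * ln ((\<epsilon> powr - real p - lam r / \<alpha> r) / (\<bar>y0 r\<bar> powr - real p - lam r / \<alpha> r))"
        using big h unfolding q_def s1 by auto
    next
      assume h: "\<epsilon> < \<bar>y0 r\<bar> \<and> lam r \<noteq> 0 \<and> odd p"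
      then have s1: "\<sigma> = sgn (y0 r)" using sig_odd by blast
      show "1 < (\<epsilon> powr - real p - sgn (y0 r) * lam r / \<alpha> r) / (\<bar>y0 r\<bar> powr - real p - sgn (y0 r) * lam r / \<alpha> r)"
        using big h unfolding q_def s1 by auto
      show "Inf S = 1 / (real p * \<alpha> r) * ln ((\<epsilon> powr - real p - sgn (y0 r) * lam r / \<alpha> r) / (\<bar>y0 r\<bar> powr - real p - sgn (y0 r) * lam r / \<alpha> r))"
        using big h unfolding q_def s1 by auto
    qed
  qed
qed

end
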